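(* Let $X$ be a finite set, let $N$ be a rooted phylogenetic network on $X$, and let $\widetilde{N}$ be the normalisation of $N$. Suppose that $u,v$ are vertices of $\widetilde{N}$ and that there is a directed path $p$ from $u$ to $v$ in $\widetilde{N}$. Then there is a directed path in $N$ from $u$ to $v$ that contains every vertex of $p$ (and possibly additional vertices).
   Context: A rooted phylogenetic network on a finite set $X$ is a finite acyclic directed graph $N$ with a single vertex of in-degree $0$ (the root $\rho$), all other vertices being of one of three types: (1) in-degree $1$ and out-degree $0$ (the leaves, which form exactly the set $X$); (2) in-degree $1$ and out-degree at least $2$; (3) out-degree $1$ and in-degree at least $2$ (reticulate vertices). A vertex $v$ of $N$ is visible if there is a leaf $x\in X$ such that every directed path from $\rho$ to $x$ passes through $v$; the root and all leaves are visible. Let $V_{\rm vis}(N)$ be the set of visible vertices. Define the directed graph ${\rm Cov}(N)$ with vertex set $V_{\rm vis}(N)$ as follows: for each pair $u\neq v$ of visible vertices such that $N$ has a directed path from $u$ to $v$, put an arc $(u,v)$; then delete every arc $(u,v)$ for which there is also a directed path of length at least $2$ from $u$ to $v$ in this graph (so ${\rm Cov}(N)$ is the Hasse diagram of the reachability partial order on $V_{\rm vis}(N)$). A vertex is subdividing if its in-degree and out-degree are both $1$. The normalisation $\widetilde{N}$ of $N$ is the directed graph obtained from ${\rm Cov}(N)$ by suppressing every subdividing vertex (i.e. replacing each maximal path whose interior vertices are subdividing by a single arc between its endpoints). *)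

theory Defs
  imports Main
begin

definition indeg :: "('v \<times> 'v) set \<Rightarrow> 'v \<Rightarrow> nat" where
  "indeg A v = card {u. (u, v) \<in> A}"

definition outdeg :: "('v \<times> 'v) set \<Rightarrow> 'v \<Rightarrow> nat" where
  "outdeg A v = card {w. (v, w) \<in> A}"

definition dpath :: "'v set \<Rightarrow> ('v \<times> 'v) set \<Rightarrow> 'v list \<Rightarrow> bool" where
  "dpath V A ps \<longleftrightarrow> ps \<noteq> [] \<and> set ps \<subseteq> V \<and>
     (\<forall>i. Suc i < length ps \<longrightarrow> (ps ! i, ps ! Suc i) \<in> A)"

definition dpath_from_to :: "'v set \<Rightarrow> ('v \<times> 'v) set \<Rightarrow> 'v \<Rightarrow> 'v \<Rightarrow> 'v list \<Rightarrow> bool" where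
  "dpath_from_to V A u v ps \<longleftrightarrow> dpath V A ps \<and> hd ps = u \<and> last ps = v"

definition phylo_network :: "'v set \<Rightarrow> ('v \<times> 'v) set \<Rightarrow> 'v \<Rightarrow> 'v set \<Rightarrow> bool" where
  "phylo_network V A r X \<longleftrightarrow>
     finite V \<and> A \<subseteq> V \<times> V \<and> acyclic A \<and>
     r \<in> V \<and> indeg A r = 0 \<and> X \<subseteq> V - {r} \<and>
     (\<forall>v \<in> V - {r}.
        (v \<in> X \<and> indeg A v = 1 \<and> outdeg A v = 0) \<or>
        (v \<notin> X \<and> indeg A v = 1 \<and> outdeg A v \<ge> 2) \<or>
        (v \<notin> X \<and> outdeg A v = 1 \<and> indeg A v \<ge> 2))"

definition visible :: "'v set \<Rightarrow> ('v \<times> 'v) set \<Rightarrow> 'v \<Rightarrow> 'v set \<Rightarrow> 'v \<Rightarrow> bool" where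
  "visible V A r X v \<longleftrightarrow> v \<in> V \<and>
     (v = r \<or> v \<in> X \<or>
      (\<exists>x \<in> X. \<forall>ps. dpath_from_to V A r x ps \<longrightarrow> v \<in> set ps))"

definition Vvis :: "'v set \<Rightarrow> ('v \<times> 'v) set \<Rightarrow> 'v \<Rightarrow> 'v set \<Rightarrow> 'v set" where
  "Vvis V A r X = {v. visible V A r X v}"

definition reach_vis :: "'v set \<Rightarrow> ('v \<times> 'v) set \<Rightarrow> 'v \<Rightarrow> 'v set \<Rightarrow> ('v \<times> 'v) set" where
  "reach_vis V A r X = {(u, v). u \<in> Vvis V A r X \<and> v \<in> Vvis V A r X \<and> u \<noteq> v \<and> (u, v) \<in> A\<^sup>+}"

definition cov_arcs :: "'v set \<Rightarrow> ('v \<times> 'v) set \<Rightarrow> 'v \<Rightarrow> 'v set \<Rightarrow> ('v \<times> 'v) set" where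
  "cov_arcs V A r X = reach_vis V A r X - (reach_vis V A r X O (reach_vis V A r X)\<^sup>+)"

definition cov_subdiv :: "'v set \<Rightarrow> ('v \<times> 'v) set \<Rightarrow> 'v \<Rightarrow> 'v set \<Rightarrow> 'v set" where
  "cov_subdiv V A r X = {v \<in> Vvis V A r X.
      indeg (cov_arcs V A r X) v = 1 \<and> outdeg (cov_arcs V A r X) v = 1}"

definition norm_vertices :: "'v set \<Rightarrow> ('v \<times> 'v) set \<Rightarrow> 'v \<Rightarrow> 'v set \<Rightarrow> 'v set" where
  "norm_vertices V A r X = Vvis V A r X - cov_subdiv V A r X"

definition norm_arcs :: "'v set \<Rightarrow> ('v \<times> 'v) set \<Rightarrow> 'v \<Rightarrow> 'v set \<Rightarrow> ('v \<times> 'v) set" where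
  "norm_arcs V A r X = {(a, b). a \<in> norm_vertices V A r X \<and> b \<in> norm_vertices V A r X \<and>
     (\<exists>ps. dpath_from_to (Vvis V A r X) (cov_arcs V A r X) a b ps \<and> length ps \<ge> 2 \<and>
        (\<forall>i. 0 < i \<and> Suc i < length ps \<longrightarrow> ps ! i \<in> cov_subdiv V A r X))}"

end

theory Submission
  imports Defs
begin

lemma dpath_single[simp]: "dpath V A [x] \<longleftrightarrow> x \<in> V"
  by (auto simp: dpath_def)

lemma dpath_Cons2[simp]:
  "dpath V A (x # y # ys) \<longleftrightarrow> x \<in> V \<and> (x, y) \<in> A \<and> dpath V A (y # ys)"
proof
  assume h: "dpath V A (x # y # ys)"
  have "Suc 0 < length (x # y # ys)" by simp
  then have "((x # y # ys) ! 0, (x # y # ys) ! Suc 0) \<in> A" using h unfolding dpath_def by blast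
  then have "(x, y) \<in> A" by simp
  moreover have "dpath V A (y # ys)" unfolding dpath_def
  proof (intro conjI allI impI)
    fix i assume "Suc i < length (y # ys)"
    then have "Suc (Suc i) < length (x # y # ys)" by simp
    then have "((x # y # ys) ! Suc i, (x # y # ys) ! Suc (Suc i)) \<in> A" using h unfolding dpath_def by blast
    then show "((y # ys) ! i, (y # ys) ! Suc i) \<in> A" by simp
  qed (use h in \<open>auto simp: dpath_def\<close>)
  ultimately show "x \<in> V \<and> (x, y) \<in> A \<and> dpath V A (y # ys)" using h by (auto simp: dpath_def)
next
  assume h: "x \<in> V \<and> (x, y) \<in> A \<and> dpath V A (y # ys)"
  show "dpath V A (x # y # ys)" unfolding dpath_def
  proof (intro conjI allI impI)
    fix i assume i: "Suc i < length (x # y # ys)"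
    show "((x # y # ys) ! i, (x # y # ys) ! Suc i) \<in> A"
    proof (cases i)
      case 0 then show ?thesis using h by simp
    next
      case (Suc j)
      then have "Suc j < length (y # ys)" using i by simp
      then have "((y # ys) ! j, (y # ys) ! Suc j) \<in> A" using h unfolding dpath_def by blast
      then show ?thesis using Suc by simp
    qed
  qed (use h in \<open>auto simp: dpath_def\<close>)
qed

lemma dpath_trancl:
  "dpath W R ps \<Longrightarrow> length ps \<ge> 2 \<Longrightarrow> (hd ps, last ps) \<in> R\<^sup>+"
proof (induction ps rule: induct_list012)
  case (3 x y zs)
  show ?case
  proof (cases zs)
    case Nil then show ?thesis using 3 by auto
  next
    case (Cons z zs')
    then have "(y, last (y # zs)) \<in> R\<^sup>+" using 3 by auto
    then show ?thesis using 3 by auto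
  qed
qed auto

lemma dpath_concat:
  "dpath V A (q0 @ [b]) \<Longrightarrow> dpath V A (b # q') \<Longrightarrow> dpath V A (q0 @ b # q')"
proof (induction q0)
  case (Cons x q0)
  then show ?case by (cases q0) auto
qed auto

lemma trancl_path:
  assumes "(a, b) \<in> A\<^sup>+" "A \<subseteq> V \<times> V"
  shows "\<exists>q. dpath V A (a # q @ [b])"
  using assms(1)
proof (induction rule: converse_trancl_induct)
  case (base y)
  then have "y \<in> V" "b \<in> V" using assms(2) by auto
  then show ?case using base by (intro exI[of _ "[]"]) auto
next
  case (step y z)
  then obtain q where q: "dpath V A (z # q @ [b])" by blast
  have "y \<in> V" using step assms(2) by auto
  then show ?case using q step by (intro exI[of _ "z # q"]) auto
qed

lemma main_gen:
  assumes "dpath W R p" "R \<subseteq> A\<^sup>+" "W \<subseteq> V" "A \<subseteq> V \<times> V"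
  shows "\<exists>q. dpath V A q \<and> hd q = hd p \<and> last q = last p \<and> set p \<subseteq> set q"
  using assms(1)
proof (induction p rule: induct_list012)
  case 1 then show ?case by (simp add: dpath_def)
next
  case (2 x) then show ?case using assms(3) by (intro exI[of _ "[x]"]) auto
next
  case (3 x y zs)
  from "3.prems" have P: "x \<in> W" "(x, y) \<in> R" "dpath W R (y # zs)" by simp_all
  from "3.IH"(2)[OF P(3)] obtain q where
    q: "dpath V A q" "hd q = y" "last q = last (y # zs)" "set (y # zs) \<subseteq> set q"
    by simp blast
  have "(x, y) \<in> A\<^sup>+" using P(2) assms(2) by blast
  then obtain q0 where q0: "dpath V A (x # q0 @ [y])" using trancl_path[OF _ assms(4)] by blast
  obtain q' where q': "q = y # q'" using q(1,2) by (cases q) (auto simp: dpath_def)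
  have d: "dpath V A ((x # q0) @ y # q')" using dpath_concat[of V A "x # q0" y q'] q0 q(1) q' by (metis append_Cons)
  have l: "last ((x # q0) @ y # q') = last (x # y # zs)" using q(3) q' by simp
  have s: "set (x # y # zs) \<subseteq> set ((x # q0) @ y # q')" using q(4) q' by auto
  show ?case using d l s by (intro exI[of _ "(x # q0) @ y # q'"]) simp
qed

theorem lemma1:
  fixes V :: "'v set" and A :: "('v \<times> 'v) set" and r :: 'v and X :: "'v set"
    and u v :: 'v and p :: "'v list"
  assumes "finite X"
    and "phylo_network V A r X"
    and "u \<in> norm_vertices V A r X" and "v \<in> norm_vertices V A r X"
    and "dpath_from_to (norm_vertices V A r X) (norm_arcs V A r X) u v p"
  shows "\<exists>q. dpath_from_to V A u v q \<and> set p \<subseteq> set q"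
proof -
  have AV: "A \<subseteq> V \<times> V" using assms(2) by (simp add: phylo_network_def)
  have WV: "norm_vertices V A r X \<subseteq> V"
    by (auto simp: norm_vertices_def Vvis_def visible_def)
  have covA: "cov_arcs V A r X \<subseteq> A\<^sup>+"
    by (auto simp: cov_arcs_def reach_vis_def)
  have RA: "norm_arcs V A r X \<subseteq> A\<^sup>+"
  proof
    fix e assume "e \<in> norm_arcs V A r X"
    then obtain a b ps where e: "e = (a, b)" and
      ps: "dpath_from_to (Vvis V A r X) (cov_arcs V A r X) a b ps" "length ps \<ge> 2"
      unfolding norm_arcs_def by blast
    have "(a, b) \<in> (cov_arcs V A r X)\<^sup>+" using dpath_trancl[of _ _ ps] ps
      by (auto simp: dpath_from_to_def)
    then have "(a, b) \<in> (A\<^sup>+)\<^sup>+" using trancl_mono covA by blast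
    then show "e \<in> A\<^sup>+" using e by simp
  qed
  show ?thesis
    using main_gen[OF _ RA WV AV] assms(5) by (auto simp: dpath_from_to_def)
qed

end
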